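(* Let $\alpha\in\mathbb C$. For every integer $n\ge1$, the first column $k_n:=K_ne_1$ of $K_n:=A_\alpha^n-T\big((z+z^{-1})^n\big)$ satisfies $$k_n=\sum_{i=0}^{\lfloor (n-1)/2\rfloor}\binom{n}{i}h_{n-2i}.$$
   Context: All matrices are semi-infinite with rows and columns indexed by the positive integers; $e_1$ is the first column of the semi-infinite identity. $T(a)$ denotes the Toeplitz matrix with $(i,j)$ entry $a_{j-i}$ for $a(z)=\sum_{i\in\mathbb Z}a_iz^i$, and $A_\alpha:=T(z+z^{-1})+\alpha e_1e_1^T$ (tridiagonal, ones on sub- and superdiagonal, $(1,1)$ entry $\alpha$, zeros elsewhere). Let $\theta=\alpha^2-1$ and define the polynomials $h_1(z)=\alpha z$ and, for $n\ge 2$, $h_n(z)=\theta\sum_{i=1}^{n-1}\alpha^{n-i-1}z^i+\alpha z^n$. The same symbol $h_n$ denotes the semi-infinite column vector whose $i$-th entry is the coefficient of $z^i$ in $h_n(z)$ ($i\ge1$), padded with zeros. *)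

theory Defs
  imports "HOL-Analysis.Analysis" "HOL-Computational_Algebra.Polynomial"
begin

text \<open>Semi-infinite matrices: rows and columns indexed by positive integers;
  entries at index 0 are ignored. Laurent series coefficients: int \<Rightarrow> complex.\<close>

type_synonym smat = "nat \<Rightarrow> nat \<Rightarrow> complex"

definition smat_mult :: "smat \<Rightarrow> smat \<Rightarrow> smat" (infixl "**\<^sub>s" 70) where
  "smat_mult A B = (\<lambda>i j. infsum (\<lambda>k. A i k * B k j) {1..})"

definition smat_id :: smat where
  "smat_id = (\<lambda>i j. if i = j then 1 else 0)"

fun smat_pow :: "smat \<Rightarrow> nat \<Rightarrow> smat" where
  "smat_pow A 0 = smat_id"
| "smat_pow A (Suc n) = A **\<^sub>s smat_pow A n"

definition toeplitz :: "(int \<Rightarrow> complex) \<Rightarrow> smat" where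
  "toeplitz a = (\<lambda>i j. a (int j - int i))"

text \<open>Coefficients of the Laurent polynomial z + z^{-1}.\<close>
definition zsym :: "int \<Rightarrow> complex" where
  "zsym = (\<lambda>m. if m = 1 \<or> m = -1 then 1 else 0)"

definition laurent_mult :: "(int \<Rightarrow> complex) \<Rightarrow> (int \<Rightarrow> complex) \<Rightarrow> (int \<Rightarrow> complex)" where
  "laurent_mult a b = (\<lambda>m. infsum (\<lambda>k. a k * b (m - k)) UNIV)"

fun zsym_pow :: "nat \<Rightarrow> int \<Rightarrow> complex" where
  "zsym_pow 0 = (\<lambda>m. if m = 0 then 1 else 0)"
| "zsym_pow (Suc n) = laurent_mult zsym (zsym_pow n)"

definition A_mat :: "complex \<Rightarrow> smat" where
  "A_mat \<alpha> = (\<lambda>i j. toeplitz zsym i j + (if i = 1 \<and> j = 1 then \<alpha> else 0))"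

definition K_mat :: "complex \<Rightarrow> nat \<Rightarrow> smat" where
  "K_mat \<alpha> n = (\<lambda>i j. smat_pow (A_mat \<alpha>) n i j - toeplitz (zsym_pow n) i j)"

definition h_poly :: "complex \<Rightarrow> nat \<Rightarrow> complex poly" where
  "h_poly \<alpha> n = (if n = 1 then monom \<alpha> 1
     else smult (\<alpha>^2 - 1) (\<Sum>i = 1..n-1. monom (\<alpha> ^ (n - i - 1)) i) + monom \<alpha> n)"

end

theory Submission
  imports Defs
begin

lemma laurent_zsym: "laurent_mult zsym b m = b (m - 1) + b (m + 1)"
proof -
  have "laurent_mult zsym b m = infsum (\<lambda>k. zsym k * b (m - k)) {-1, 1}"
    unfolding laurent_mult_def
    by (rule infsum_cong_neutral) (auto simp: zsym_def)
  also have "\<dots> = b (m - 1) + b (m + 1)" by (simp add: zsym_def)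
  finally show ?thesis .
qed

lemma multA: assumes "i \<ge> 1"
  shows "(A_mat \<alpha> **\<^sub>s M) i 1 = (if i \<ge> 2 then M (i-1) 1 else 0) + M (i+1) 1 + (if i = 1 then \<alpha> * M 1 1 else 0)"
proof (cases "i \<ge> 2")
  case True
  have "(A_mat \<alpha> **\<^sub>s M) i 1 = infsum (\<lambda>k. A_mat \<alpha> i k * M k 1) {i-1, i+1}"
    unfolding smat_mult_def
    by (rule infsum_cong_neutral) (use True in \<open>auto simp: A_mat_def toeplitz_def zsym_def\<close>)
  also have "\<dots> = M (i-1) 1 + M (i+1) 1" using True by (simp add: A_mat_def toeplitz_def zsym_def of_nat_diff)
  finally show ?thesis using True by simp
next
  case False
  then have i: "i = 1" using assms by simp
  have "(A_mat \<alpha> **\<^sub>s M) i 1 = infsum (\<lambda>k. A_mat \<alpha> i k * M k 1) {1, 2}"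
    unfolding smat_mult_def
    by (rule infsum_cong_neutral) (use i in \<open>auto simp: A_mat_def toeplitz_def zsym_def\<close>)
  also have "\<dots> = M 2 1 + \<alpha> * M 1 1" using i by (simp add: A_mat_def toeplitz_def zsym_def)
  finally show ?thesis using i by (simp add: numeral_2_eq_2)
qed

lemma pascal:
  fixes x :: "int \<Rightarrow> complex"
  shows "(\<Sum>j=0..Suc n. of_nat (Suc n choose j) * x (m + int (Suc n) - 2*int j))
    = (\<Sum>j=0..n. of_nat (n choose j) * x (m + 1 + int n - 2*int j))
    + (\<Sum>j=0..n. of_nat (n choose j) * x (m - 1 + int n - 2*int j))"
proof -
  define g where "g j = of_nat (n choose j) * x (m + 1 + int n - 2*int j)" for j
  have g1: "(\<Sum>j=0..n. g j) = (\<Sum>j=0..Suc n. g j)" by (simp add: g_def)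
  also have "\<dots> = g 0 + (\<Sum>j=0..n. g (Suc j))" by (simp add: sum.atLeast0_atMost_Suc_shift del: sum.cl_ivl_Suc)
  finally have G: "(\<Sum>j=0..n. g j) = g 0 + (\<Sum>j=0..n. of_nat (n choose Suc j) * x (m - 1 + int n - 2*int j))"
    by (simp add: g_def algebra_simps)
  have "(\<Sum>j=0..Suc n. of_nat (Suc n choose j) * x (m + int (Suc n) - 2*int j))
     = x (m + int (Suc n)) + (\<Sum>j=0..n. of_nat (Suc n choose Suc j) * x (m + int (Suc n) - 2*int (Suc j)))"
    by (subst sum.atLeast0_atMost_Suc_shift) simp
  also have "\<dots> = x (m + int (Suc n)) + (\<Sum>j=0..n. of_nat (n choose Suc j) * x (m - 1 + int n - 2*int j))
     + (\<Sum>j=0..n. of_nat (n choose j) * x (m - 1 + int n - 2*int j))"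
    by (simp add: sum.distrib algebra_simps)
  also have "\<dots> = (\<Sum>j=0..n. g j) + (\<Sum>j=0..n. of_nat (n choose j) * x (m - 1 + int n - 2*int j))"
    using G by (simp add: g_def algebra_simps)
  finally show ?thesis by (simp add: g_def)
qed

lemma coeff_h: assumes "m \<ge> 1"
  shows "coeff (h_poly \<alpha> m) i = (if i = m then \<alpha> else if 1 \<le> i \<and> i < m then (\<alpha>^2-1) * \<alpha>^(m-i-1) else 0)"
proof (cases "m = 1")
  case True then show ?thesis by (auto simp: h_poly_def coeff_monom)
next
  case False
  have "coeff (\<Sum>k = 1..m-1. monom (\<alpha> ^ (m - k - 1)) k) i = (\<Sum>k = 1..m-1. if k = i then \<alpha> ^ (m - k - 1) else 0)"
    by (simp add: coeff_sum coeff_monom)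
  also have "\<dots> = (if 1 \<le> i \<and> i < m then \<alpha>^(m-i-1) else 0)"
    using assms by (subst sum.delta) auto
  finally show ?thesis using False assms by (auto simp: h_poly_def coeff_monom)
qed

definition u :: "complex \<Rightarrow> int \<Rightarrow> nat \<Rightarrow> complex" where
  "u \<alpha> m i = (if m \<le> 0 then (if int i = 1 - m then 1 else 0) else coeff (h_poly \<alpha> (nat m)) i)"

lemma core_pos:
  assumes k: "k \<ge> 2" and i: "i \<ge> 1"
  shows "(if i \<ge> 2 then coeff (h_poly \<alpha> k) (i-1) else 0) + coeff (h_poly \<alpha> k) (i+1)
     + (if i = 1 then \<alpha> * coeff (h_poly \<alpha> k) 1 else 0)
   = coeff (h_poly \<alpha> (k+1)) i + coeff (h_poly \<alpha> (k-1)) i"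
proof -
  consider "i = 1" "k = 2" | d where "i = 1" "k = d + 3" | p d where "i = p + 2" "k = p + 5 + d"
    | p where "i = p + 2" "k = p + 4" | p where "i = p + 2" "k = p + 3" | p where "i = p + 2" "k = p + 2"
    | p where "i = p + 2" "k + 1 = p + 2" | p where "i = p + 2" "k + 1 < p + 2"
  proof -
    show thesis if a1: "i = 1 \<Longrightarrow> k = 2 \<Longrightarrow> thesis"
      and a2: "\<And>d. i = 1 \<Longrightarrow> k = d + 3 \<Longrightarrow> thesis"
      and a3: "\<And>p d. i = p + 2 \<Longrightarrow> k = p + 5 + d \<Longrightarrow> thesis"
      and a4: "\<And>p. i = p + 2 \<Longrightarrow> k = p + 4 \<Longrightarrow> thesis"
      and a5: "\<And>p. i = p + 2 \<Longrightarrow> k = p + 3 \<Longrightarrow> thesis"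
      and a6: "\<And>p. i = p + 2 \<Longrightarrow> k = p + 2 \<Longrightarrow> thesis"
      and a7: "\<And>p. i = p + 2 \<Longrightarrow> k + 1 = p + 2 \<Longrightarrow> thesis"
      and a8: "\<And>p. i = p + 2 \<Longrightarrow> k + 1 < p + 2 \<Longrightarrow> thesis"
    proof (cases "i = 1")
      case True
      show thesis
      proof (cases "k = 2")
        case True with \<open>i=1\<close> a1 show thesis by simp
      next
        case False with k have "k = (k - 3) + 3" by simp
        with a2 \<open>i=1\<close> show thesis by blast
      qed
    next
      case False
      with i have ip: "i = (i - 2) + 2" by simp
      show thesis
      proof (cases "k \<ge> i + 3")
        case True then have "k = (i - 2) + 5 + (k - i - 3)" using ip by simp
        with a3 ip show thesis by blast
      next
        case False
        then consider "k = i + 2" | "k = i + 1" | "k = i" | "k + 1 = i" | "k + 1 < i" by linarith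
        then show thesis
        proof cases
          case 1 then have "k = (i-2) + 4" using ip by simp
          with a4 ip show thesis by blast
        next
          case 2 then have "k = (i-2) + 3" using ip by simp
          with a5 ip show thesis by blast
        next
          case 3 then have "k = (i-2) + 2" using ip by simp
          with a6 ip show thesis by blast
        next
          case 4 then have "k + 1 = (i-2) + 2" using ip by simp
          with a7 ip show thesis by blast
        next
          case 5 then have "k + 1 < (i-2) + 2" using ip by simp
          with a8 ip show thesis by blast
        qed
      qed
    qed
  qed
  then show ?thesis
  proof cases
    case 1
    then show ?thesis by (simp add: coeff_h power2_eq_square algebra_simps)
  next
    case (2 d)
    then show ?thesis by (simp add: coeff_h power2_eq_square algebra_simps)
  next
    case (3 p d)
    then show ?thesis by (simp add: coeff_h)
  next
    case (4 p)
    then show ?thesis by (simp add: coeff_h)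
  next
    case (5 p)
    then show ?thesis by (simp add: coeff_h)
  next
    case (6 p)
    then show ?thesis by (simp add: coeff_h)
  next
    case (7 p)
    then show ?thesis using k by (simp add: coeff_h)
  next
    case (8 p)
    then show ?thesis using k by (auto simp add: coeff_h)
  qed
qed

lemma core_u:
  assumes i: "i \<ge> 1"
  shows "(if i \<ge> 2 then u \<alpha> m (i-1) else 0) + u \<alpha> m (i+1) + (if i = 1 then \<alpha> * u \<alpha> m 1 else 0)
    = u \<alpha> (m+1) i + u \<alpha> (m-1) i"
proof -
  consider "m \<le> -1" | "m = 0" | "m = 1" | "m \<ge> 2" by linarith
  then show ?thesis
  proof cases
    case 1 then show ?thesis using i by (auto simp: u_def)
  next
    case 2 then show ?thesis using i by (auto simp: u_def coeff_h)
  next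
    case 3
    have h2: "coeff (h_poly \<alpha> 2) i = (if i = 2 then \<alpha> else if i = 1 then \<alpha>^2 - 1 else 0)"
      using i by (auto simp: coeff_h)
    show ?thesis using 3 i h2 by (auto simp: u_def coeff_h power2_eq_square)
  next
    case 4
    define k where "k = nat m"
    have k: "k \<ge> 2" "m = int k" using 4 by (auto simp: k_def)
    have e1: "nat (m + 1) = k + 1" "nat (m - 1) = k - 1" using k by auto
    have "nat m = k" using k by simp
    then show ?thesis using core_pos[OF k(1) i, of \<alpha>] 4 e1 i
      by (cases "i \<ge> 2") (auto simp: u_def numeral_2_eq_2)
  qed
qed

lemma col:
  assumes "i \<ge> 1"
  shows "smat_pow (A_mat \<alpha>) n i 1 = (\<Sum>j=0..n. of_nat (n choose j) * u \<alpha> (int n - 2*int j) i)"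
  using assms
proof (induction n arbitrary: i)
  case 0
  then show ?case by (simp add: smat_id_def u_def)
next
  case (Suc n)
  define S where "S i = (\<Sum>j=0..n. of_nat (n choose j) * u \<alpha> (int n - 2*int j) i)" for i
  have "smat_pow (A_mat \<alpha>) (Suc n) i 1 = (if i \<ge> 2 then S (i-1) else 0) + S (i+1) + (if i = 1 then \<alpha> * S 1 else 0)"
  proof -
    have m: "smat_pow (A_mat \<alpha>) (Suc n) i 1 = (if i \<ge> 2 then smat_pow (A_mat \<alpha>) n (i-1) 1 else 0)
      + smat_pow (A_mat \<alpha>) n (i+1) 1 + (if i = 1 then \<alpha> * smat_pow (A_mat \<alpha>) n 1 1 else 0)"
      using multA[OF Suc.prems] by simp
    show ?thesis
    proof (cases "i \<ge> 2")
      case True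
      then show ?thesis unfolding m S_def using Suc.IH[of "i-1"] Suc.IH[of "i+1"] by simp
    next
      case False
      then have "i = 1" using Suc.prems by simp
      then show ?thesis unfolding m S_def using Suc.IH[of 1] Suc.IH[of 2] by (simp add: numeral_2_eq_2)
    qed
  qed
  also have "\<dots> = (\<Sum>j=0..n. of_nat (n choose j) *
      ((if i \<ge> 2 then u \<alpha> (int n - 2*int j) (i-1) else 0) + u \<alpha> (int n - 2*int j) (i+1)
        + (if i = 1 then \<alpha> * u \<alpha> (int n - 2*int j) 1 else 0)))"
    by (simp add: S_def sum.distrib sum_distrib_left algebra_simps)
  also have "\<dots> = (\<Sum>j=0..n. of_nat (n choose j) *
      (u \<alpha> (int n - 2*int j + 1) i + u \<alpha> (int n - 2*int j - 1) i))"
    using core_u[OF Suc.prems] by simp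
  also have "\<dots> = (\<Sum>j=0..n. of_nat (n choose j) * u \<alpha> (0 + 1 + int n - 2*int j) i)
      + (\<Sum>j=0..n. of_nat (n choose j) * u \<alpha> (0 - 1 + int n - 2*int j) i)"
    by (simp add: sum.distrib algebra_simps)
  also have "\<dots> = (\<Sum>j=0..Suc n. of_nat (Suc n choose j) * u \<alpha> (0 + int (Suc n) - 2*int j) i)"
    by (rule pascal[of n "\<lambda>t. u \<alpha> t i" 0, symmetric])
  finally show ?case by simp
qed

lemma zpow: "zsym_pow n k = (\<Sum>j=0..n. of_nat (n choose j) * (if int n - 2*int j = k then 1 else 0))"
proof (induction n arbitrary: k)
  case 0 then show ?case by simp
next
  case (Suc n)
  have "zsym_pow (Suc n) k = zsym_pow n (k - 1) + zsym_pow n (k + 1)" by (simp add: laurent_zsym)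
  also have "\<dots> = (\<Sum>j=0..n. of_nat (n choose j) * (if 0 + 1 + int n - 2*int j = k then 1 else 0))
      + (\<Sum>j=0..n. of_nat (n choose j) * (if 0 - 1 + int n - 2*int j = k then 1 else 0))"
    unfolding Suc.IH by (intro arg_cong2[where f="(+)"] sum.cong) auto
  also have "\<dots> = (\<Sum>j=0..Suc n. of_nat (Suc n choose j) * (if 0 + int (Suc n) - 2*int j = k then 1 else 0))"
    by (rule pascal[of n "\<lambda>t. if t = k then 1 else 0" 0, symmetric])
  finally show ?case by simp
qed

theorem theorem3:
  fixes \<alpha> :: complex and n :: nat
  assumes "n \<ge> 1"
  shows "\<forall>i\<ge>1. K_mat \<alpha> n i 1 =
           (\<Sum>j = 0..(n - 1) div 2. of_nat (n choose j) * coeff (h_poly \<alpha> (n - 2 * j)) i)"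
proof (intro allI impI)
  fix i :: nat assume i: "i \<ge> 1"
  have "K_mat \<alpha> n i 1 = (\<Sum>j=0..n. of_nat (n choose j) * u \<alpha> (int n - 2*int j) i)
     - (\<Sum>j=0..n. of_nat (n choose j) * (if int n - 2*int j = 1 - int i then 1 else 0))"
    unfolding K_mat_def toeplitz_def col[OF i] zpow by simp
  also have "\<dots> = (\<Sum>j=0..n. of_nat (n choose j) *
       (if int n - 2*int j \<ge> 1 then coeff (h_poly \<alpha> (n - 2 * j)) i else 0))"
    unfolding sum_subtractf[symmetric]
  proof (rule sum.cong[OF refl])
    fix j assume "j \<in> {0..n}"
    show "of_nat (n choose j) * u \<alpha> (int n - 2*int j) i
       - of_nat (n choose j) * (if int n - 2*int j = 1 - int i then 1 else 0)
       = of_nat (n choose j) * (if int n - 2*int j \<ge> 1 then coeff (h_poly \<alpha> (n - 2 * j)) i else 0)"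
    proof (cases "int n - 2*int j \<ge> 1")
      case True
      then have "nat (int n - 2*int j) = n - 2*j" by linarith
      then show ?thesis using True i by (simp add: u_def)
    next
      case False
      then show ?thesis using i by (auto simp: u_def)
    qed
  qed
  also have "\<dots> = (\<Sum>j = 0..(n - 1) div 2. of_nat (n choose j) * coeff (h_poly \<alpha> (n - 2 * j)) i)"
  proof (rule sum.mono_neutral_cong_right)
    show "{0..(n - 1) div 2} \<subseteq> {0..n}" by auto
    show "\<forall>j\<in>{0..n} - {0..(n - 1) div 2}. of_nat (n choose j) *
       (if int n - 2*int j \<ge> 1 then coeff (h_poly \<alpha> (n - 2 * j)) i else 0) = 0"
      by auto
    show "\<And>j. j \<in> {0..(n - 1) div 2} \<Longrightarrow> of_nat (n choose j) *
       (if int n - 2*int j \<ge> 1 then coeff (h_poly \<alpha> (n - 2 * j)) i else 0)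
       = of_nat (n choose j) * coeff (h_poly \<alpha> (n - 2 * j)) i"
      using assms by auto
  qed simp
  finally show "K_mat \<alpha> n i 1 =
           (\<Sum>j = 0..(n - 1) div 2. of_nat (n choose j) * coeff (h_poly \<alpha> (n - 2 * j)) i)" .
qed

end
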